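(* Let $Q$ be a real symmetric matrix acting on $(\mathbb{R}^M)^{\otimes N}$. Then the following are equivalent: 1. $\langle\psi|Q|\psi\rangle=0$ for all $\psi\in V$; 2. $\sum_{\tau\subseteq\{1,\dots,N\}}Q^{T_\tau}=0$, the sum running over all $2^N$ subsets $\tau$; 3. $Q=\sum_g c_g\bigotimes_{k=1}^N G_{g_k}$ with real coefficients $c_g$, where $c_g=0$ whenever all components of $g=(g_1,\dots,g_N)$ are non-negative.
   Context: $V$ denotes the set of normalized real product vectors $\psi=\psi_1\otimes\cdots\otimes\psi_N$ with $\psi_k\in\mathbb{R}^M$. $Q^{T_\tau}$ is the partial transpose of $Q$ (in the standard basis) on the tensor factors in $\tau$. $\{G_\gamma\}$ is a set of $M^2$ real $M\times M$ matrices ("generalized Gell-Mann matrices") forming a basis of all real $M\times M$ matrices, orthogonal w.r.t. the Hilbert–Schmidt inner product $(X,Y)\mapsto\mathrm{tr}[XY^T]$, with $G_0=\mathbb{1}$, $G_\gamma$ symmetric for $\gamma\ge0$ (there are $M(M+1)/2$ such indices) and antisymmetric for $\gamma<0$ (there are $M(M-1)/2$ such indices), normalized by $\mathrm{tr}[G_\gamma G_{\gamma'}^T]=2\delta_{\gamma\gamma'}$ for $\gamma,\gamma'\ne0$. The index $g$ ranges over $N$-tuples of such indices. *)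

theory Defs
  imports Complex_Main
begin

text \<open>The tensor factors are numbered 0..N-1 (instead of 1..N).
  A basis vector of (R^M)^{tensor N} is indexed by a multi-index: a list of
  length N with entries in {0..<M}. A (real) matrix on (R^M)^{tensor N} is a
  function from pairs of multi-indices (row, column) to reals; a real
  M x M matrix is a function nat => nat => real on {0..<M} x {0..<M}.\<close>

definition idx :: "nat \<Rightarrow> nat \<Rightarrow> nat list set" where
  "idx M N = {xs. length xs = N \<and> set xs \<subseteq> {0..<M}}"

text \<open>Index set of the generalized Gell-Mann matrices: the indices gamma >= 0
  (M(M+1)/2 of them) are 0..M(M+1)/2-1, the indices gamma < 0 (M(M-1)/2 of them)
  are -M(M-1)/2..-1.\<close>
definition Gamma :: "nat \<Rightarrow> int set" where
  "Gamma M = {- int (M * (M - 1) div 2) .. int (M * (M + 1) div 2) - 1}"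

definition gidx :: "nat \<Rightarrow> nat \<Rightarrow> int list set" where
  "gidx M N = {g. length g = N \<and> set g \<subseteq> Gamma M}"

definition hs :: "nat \<Rightarrow> (nat \<Rightarrow> nat \<Rightarrow> real) \<Rightarrow> (nat \<Rightarrow> nat \<Rightarrow> real) \<Rightarrow> real" where
  "hs M X Y = (\<Sum>a<M. \<Sum>b<M. X a b * Y a b)"

definition gell_mann :: "nat \<Rightarrow> (int \<Rightarrow> nat \<Rightarrow> nat \<Rightarrow> real) \<Rightarrow> bool" where
  "gell_mann M G \<longleftrightarrow>
     (\<forall>a<M. \<forall>b<M. G 0 a b = (if a = b then 1 else 0)) \<and>
     (\<forall>\<gamma>\<in>Gamma M. \<gamma> \<ge> 0 \<longrightarrow> (\<forall>a<M. \<forall>b<M. G \<gamma> a b = G \<gamma> b a)) \<and>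
     (\<forall>\<gamma>\<in>Gamma M. \<gamma> < 0 \<longrightarrow> (\<forall>a<M. \<forall>b<M. G \<gamma> a b = - G \<gamma> b a)) \<and>
     (\<forall>\<gamma>\<in>Gamma M. \<forall>\<gamma>'\<in>Gamma M. \<gamma> \<noteq> \<gamma>' \<longrightarrow> hs M (G \<gamma>) (G \<gamma>') = 0) \<and>
     (\<forall>\<gamma>\<in>Gamma M. \<gamma> \<noteq> 0 \<longrightarrow> hs M (G \<gamma>) (G \<gamma>) = 2) \<and>
     (\<forall>X :: nat \<Rightarrow> nat \<Rightarrow> real. \<exists>c :: int \<Rightarrow> real.
        \<forall>a<M. \<forall>b<M. X a b = (\<Sum>\<gamma>\<in>Gamma M. c \<gamma> * G \<gamma> a b))"

definition prodvec :: "nat \<Rightarrow> (nat \<Rightarrow> nat \<Rightarrow> real) \<Rightarrow> nat list \<Rightarrow> real" where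
  "prodvec N \<phi> i = (\<Prod>k<N. \<phi> k (i ! k))"

definition Vprod :: "nat \<Rightarrow> nat \<Rightarrow> (nat list \<Rightarrow> real) set" where
  "Vprod M N = {\<psi>. (\<exists>\<phi>. \<psi> = prodvec N \<phi>) \<and> (\<Sum>i\<in>idx M N. (\<psi> i)\<^sup>2) = 1}"

definition expect :: "nat \<Rightarrow> nat \<Rightarrow> (nat list \<Rightarrow> nat list \<Rightarrow> real) \<Rightarrow> (nat list \<Rightarrow> real) \<Rightarrow> real" where
  "expect M N Q \<psi> = (\<Sum>i\<in>idx M N. \<Sum>j\<in>idx M N. \<psi> i * Q i j * \<psi> j)"

definition symmetric_op :: "nat \<Rightarrow> nat \<Rightarrow> (nat list \<Rightarrow> nat list \<Rightarrow> real) \<Rightarrow> bool" where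
  "symmetric_op M N Q \<longleftrightarrow> (\<forall>i\<in>idx M N. \<forall>j\<in>idx M N. Q i j = Q j i)"

text \<open>Partial transpose on the tensor factors in tau (standard basis).\<close>
definition mix :: "nat \<Rightarrow> nat set \<Rightarrow> nat list \<Rightarrow> nat list \<Rightarrow> nat list" where
  "mix N \<tau> a b = map (\<lambda>k. if k \<in> \<tau> then a ! k else b ! k) [0..<N]"

definition ptrans :: "nat \<Rightarrow> nat set \<Rightarrow> (nat list \<Rightarrow> nat list \<Rightarrow> real) \<Rightarrow> nat list \<Rightarrow> nat list \<Rightarrow> real" where
  "ptrans N \<tau> Q i j = Q (mix N \<tau> j i) (mix N \<tau> i j)"

definition gtensor :: "nat \<Rightarrow> (int \<Rightarrow> nat \<Rightarrow> nat \<Rightarrow> real) \<Rightarrow> int list \<Rightarrow> nat list \<Rightarrow> nat list \<Rightarrow> real" where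
  "gtensor N G g i j = (\<Prod>k<N. G (g ! k) (i ! k) (j ! k))"

end

theory Submission
  imports Defs
begin

lemma lists_Suc:
  "{g. length g = Suc N \<and> set g \<subseteq> A} = (\<lambda>(x,g). x#g) ` (A \<times> {g. length g = N \<and> set g \<subseteq> A})"
  by (auto simp: length_Suc_conv image_iff)

lemma finite_lists: "finite A \<Longrightarrow> finite {g. length g = N \<and> set g \<subseteq> A}"
  using finite_lists_length_eq[of A N] by (simp add: conj_commute)

lemma sum_lists_Suc:
  assumes "finite A"
  shows "(\<Sum>g\<in>{g. length g = Suc N \<and> set g \<subseteq> A}. f g) = (\<Sum>x\<in>A. \<Sum>g\<in>{g. length g = N \<and> set g \<subseteq> A}. f (x#g))"
proof -
  have inj: "inj_on (\<lambda>(x,g). x#g) (A \<times> {g. length g = N \<and> set g \<subseteq> A})"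
    by (auto simp: inj_on_def)
  show ?thesis
    unfolding lists_Suc sum.reindex[OF inj]
    by (simp add: sum.cartesian_product split_def)
qed

lemma prod_sum_lists:
  fixes f :: "nat \<Rightarrow> 'a \<Rightarrow> 'b::comm_semiring_1"
  assumes "finite A"
  shows "(\<Prod>k<N. \<Sum>x\<in>A. f k x) = (\<Sum>g\<in>{g. length g = N \<and> set g \<subseteq> A}. \<Prod>k<N. f k (g!k))"
proof (induction N arbitrary: f)
  case 0
  have "{g. length g = 0 \<and> set g \<subseteq> A} = {[]}" by auto
  then show ?case by simp
next
  case (Suc N)
  have "(\<Prod>k<Suc N. \<Sum>x\<in>A. f k x) = (\<Sum>x\<in>A. f 0 x) * (\<Prod>k<N. \<Sum>x\<in>A. f (Suc k) x)"
    by (simp add: prod.lessThan_Suc_shift del: prod.lessThan_Suc)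
  also have "\<dots> = (\<Sum>x\<in>A. f 0 x) * (\<Sum>g\<in>{g. length g = N \<and> set g \<subseteq> A}. \<Prod>k<N. f (Suc k) (g!k))"
    using Suc by simp
  also have "\<dots> = (\<Sum>x\<in>A. \<Sum>g\<in>{g. length g = N \<and> set g \<subseteq> A}. f 0 x * (\<Prod>k<N. f (Suc k) (g!k)))"
    by (simp only: sum_product)
  also have "\<dots> = (\<Sum>g\<in>{g. length g = Suc N \<and> set g \<subseteq> A}. \<Prod>k<Suc N. f k (g!k))"
    unfolding sum_lists_Suc[OF assms] by (simp add: prod.lessThan_Suc_shift del: prod.lessThan_Suc)
  finally show ?case .
qed

lemma idx_Suc_sum: "(\<Sum>i\<in>idx M (Suc N). f i) = (\<Sum>a<M. \<Sum>i\<in>idx M N. f (a#i))"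
  unfolding idx_def using sum_lists_Suc[where A="{0..<M}" and N=N and f=f] by (simp add: atLeast0LessThan)

lemma finite_idx: "finite (idx M N)"
  unfolding idx_def by (rule finite_lists) simp

lemma idx_0: "idx M 0 = {[]}" by (auto simp: idx_def)

lemma idx_Cons: "(a#i \<in> idx M (Suc N)) = (a < M \<and> i \<in> idx M N)"
  by (auto simp: idx_def)

lemma idx_Suc_cases: "x \<in> idx M (Suc N) \<Longrightarrow> \<exists>a i. x = a#i \<and> a < M \<and> i \<in> idx M N"
  by (cases x) (auto simp: idx_def)

lemma mix_Cons:
  "mix (Suc N) \<tau> (x#xs) (y#ys) = (if 0 \<in> \<tau> then x else y) # mix N {k. Suc k \<in> \<tau>} xs ys"
  unfolding mix_def by (simp add: upt_conv_Cons map_Suc_upt[symmetric] del: upt_Suc)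

lemma mix_0: "mix 0 \<tau> a b = []" by (simp add: mix_def)

lemma length_mix: "length (mix N \<tau> a b) = N" by (simp add: mix_def)

lemma nth_mix: "k < N \<Longrightarrow> mix N \<tau> a b ! k = (if k \<in> \<tau> then a!k else b!k)"
  by (simp add: mix_def)

lemma mix_idx: "a \<in> idx M N \<Longrightarrow> b \<in> idx M N \<Longrightarrow> mix N \<tau> a b \<in> idx M N"
  unfolding idx_def by (auto simp: length_mix mix_def)

lemma mix_inv1: "i \<in> idx M N \<Longrightarrow> j \<in> idx M N \<Longrightarrow> mix N \<tau> (mix N \<tau> i j) (mix N \<tau> j i) = i"
  by (rule nth_equalityI) (auto simp: length_mix nth_mix idx_def)

lemma prodvec_mix:
  assumes "length i = N" "length j = N"
  shows "prodvec N \<phi> (mix N \<tau> j i) * prodvec N \<phi> (mix N \<tau> i j) = prodvec N \<phi> i * prodvec N \<phi> j"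
  unfolding prodvec_def prod.distrib[symmetric]
  by (rule prod.cong) (auto simp: nth_mix)

lemma expect_ptrans:
  "expect M N (ptrans N \<tau> Q) (prodvec N \<phi>) = expect M N Q (prodvec N \<phi>)"
proof -
  let ?I = "idx M N \<times> idx M N"
  let ?h = "\<lambda>(i,j). (mix N \<tau> j i, mix N \<tau> i j)"
  let ?\<psi> = "prodvec N \<phi>"
  let ?F = "\<lambda>(i,j). ?\<psi> i * Q i j * ?\<psi> j"
  have bij: "bij_betw ?h ?I ?I"
    by (rule bij_betw_byWitness[where f'="?h"]) (auto simp: mix_inv1 mix_idx)
  have pw: "?\<psi> i * Q (mix N \<tau> j i) (mix N \<tau> i j) * ?\<psi> j
      = ?\<psi> (mix N \<tau> j i) * Q (mix N \<tau> j i) (mix N \<tau> i j) * ?\<psi> (mix N \<tau> i j)"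
    if "i \<in> idx M N" "j \<in> idx M N" for i j
  proof -
    have "length i = N" "length j = N" using that by (auto simp: idx_def)
    from prodvec_mix[OF this, of \<phi> \<tau>]
    show ?thesis by (simp add: algebra_simps)
  qed
  have "expect M N (ptrans N \<tau> Q) ?\<psi> = (\<Sum>p\<in>?I. ?F (?h p))"
    unfolding expect_def sum.cartesian_product ptrans_def
    by (rule sum.cong[OF refl]) (auto simp: pw)
  also have "\<dots> = (\<Sum>p\<in>?I. ?F p)"
    by (rule sum.reindex_bij_betw[OF bij])
  also have "\<dots> = expect M N Q ?\<psi>"
    unfolding expect_def sum.cartesian_product by (simp add: split_def)
  finally show ?thesis .
qed

lemma expect_sum_ops:
  "expect M N (\<lambda>i j. \<Sum>\<tau>\<in>T. P \<tau> i j) \<psi> = (\<Sum>\<tau>\<in>T. expect M N (P \<tau>) \<psi>)"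
  unfolding expect_def by (simp add: sum_distrib_left sum_distrib_right sum.swap[of _ T])

lemma expect_cong:
  "(\<And>i j. i \<in> idx M N \<Longrightarrow> j \<in> idx M N \<Longrightarrow> P i j = P' i j) \<Longrightarrow> expect M N P \<psi> = expect M N P' \<psi>"
  unfolding expect_def by (auto intro!: sum.cong)

lemma two_to_one:
  assumes "\<forall>i\<in>idx M N. \<forall>j\<in>idx M N. (\<Sum>\<tau>\<in>Pow {0..<N}. ptrans N \<tau> Q i j) = 0"
  shows "expect M N Q (prodvec N \<phi>) = 0"
proof -
  have "0 = expect M N (\<lambda>i j. \<Sum>\<tau>\<in>Pow {0..<N}. ptrans N \<tau> Q i j) (prodvec N \<phi>)"
    using assms by (subst expect_cong[where P'="\<lambda>i j. 0"]) (auto simp: expect_def)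
  also have "\<dots> = (\<Sum>\<tau>\<in>Pow {0..<N}. expect M N Q (prodvec N \<phi>))"
    by (simp add: expect_sum_ops expect_ptrans)
  also have "\<dots> = 2^N * expect M N Q (prodvec N \<phi>)"
    by (simp add: card_Pow)
  finally show ?thesis by simp
qed

lemma Suc_image_pre: "{k. Suc k \<in> Suc ` \<sigma>} = \<sigma>" by auto
lemma Suc_image_pre2: "{k. Suc k \<in> insert 0 (Suc ` \<sigma>)} = \<sigma>" by auto

lemma tau_decomp: "\<tau> = (if 0 \<in> \<tau> then insert 0 (Suc ` {k. Suc k \<in> \<tau>}) else Suc ` {k. Suc k \<in> \<tau>})"
  by (auto simp: image_iff) (metis not0_implies_Suc)+

lemma Pow_Suc_eq:
  "Pow {0..<Suc N} = (\<lambda>\<sigma>. Suc ` \<sigma>) ` Pow {0..<N} \<union> (\<lambda>\<sigma>. insert 0 (Suc ` \<sigma>)) ` Pow {0..<N}"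
proof (rule equalityI)
  show "Pow {0..<Suc N} \<subseteq> (\<lambda>\<sigma>. Suc ` \<sigma>) ` Pow {0..<N} \<union> (\<lambda>\<sigma>. insert 0 (Suc ` \<sigma>)) ` Pow {0..<N}"
  proof
    fix \<tau> assume t: "\<tau> \<in> Pow {0..<Suc N}"
    have s: "{k. Suc k \<in> \<tau>} \<in> Pow {0..<N}" using t by auto
    show "\<tau> \<in> (\<lambda>\<sigma>. Suc ` \<sigma>) ` Pow {0..<N} \<union> (\<lambda>\<sigma>. insert 0 (Suc ` \<sigma>)) ` Pow {0..<N}"
    proof (cases "0 \<in> \<tau>")
      case True
      then have "\<tau> = insert 0 (Suc ` {k. Suc k \<in> \<tau>})" by (subst tau_decomp) simp
      then show ?thesis using s by blast
    next
      case False
      then have "\<tau> = Suc ` {k. Suc k \<in> \<tau>}" by (subst tau_decomp) simp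
      then show ?thesis using s by blast
    qed
  qed
qed auto

lemma sum_Pow_Suc:
  "(\<Sum>\<tau>\<in>Pow {0..<Suc N}. f \<tau>) = (\<Sum>\<sigma>\<in>Pow {0..<N}. f (Suc ` \<sigma>) + f (insert 0 (Suc ` \<sigma>)))"
proof -
  have i1: "inj_on (\<lambda>\<sigma>. Suc ` \<sigma>) (Pow {0..<N})"
    by (rule inj_onI) (metis Suc_image_pre)
  have i2: "inj_on (\<lambda>\<sigma>. insert 0 (Suc ` \<sigma>)) (Pow {0..<N})"
    by (rule inj_onI) (metis Suc_image_pre2)
  have d: "(\<lambda>\<sigma>. Suc ` \<sigma>) ` Pow {0..<N} \<inter> (\<lambda>\<sigma>. insert 0 (Suc ` \<sigma>)) ` Pow {0..<N} = {}"
    by auto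
  show ?thesis
    unfolding Pow_Suc_eq
    by (subst sum.union_disjoint) (auto simp: d sum.reindex[OF i1] sum.reindex[OF i2] sum.distrib)
qed

lemma ptrans_Cons1:
  "ptrans (Suc N) (Suc ` \<sigma>) Q (a#i) (b#j) = ptrans N \<sigma> (\<lambda>x y. Q (a#x) (b#y)) i j"
  by (simp add: ptrans_def mix_Cons Suc_image_pre)

lemma ptrans_Cons2:
  "ptrans (Suc N) (insert 0 (Suc ` \<sigma>)) Q (a#i) (b#j) = ptrans N \<sigma> (\<lambda>x y. Q (b#x) (a#y)) i j"
  by (simp add: ptrans_def mix_Cons Suc_image_pre2 Suc_image_pre)

lemma prodvec_Cons: "prodvec (Suc N) (case_nat \<phi>0 \<phi>) (a#i) = \<phi>0 a * prodvec N \<phi> i"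
  by (simp add: prodvec_def prod.lessThan_Suc_shift del: prod.lessThan_Suc)

lemma expect_Cons:
  "expect M (Suc N) Q (prodvec (Suc N) (case_nat \<phi>0 \<phi>)) =
   expect M N (\<lambda>i j. \<Sum>a<M. \<Sum>b<M. \<phi>0 a * \<phi>0 b * Q (a#i) (b#j)) (prodvec N \<phi>)"
proof -
  let ?I = "idx M N"
  let ?\<psi> = "prodvec N \<phi>"
  let ?H = "\<lambda>a b i j. \<phi>0 a * \<phi>0 b * (?\<psi> i * Q (a#i) (b#j) * ?\<psi> j)"
  have "expect M (Suc N) Q (prodvec (Suc N) (case_nat \<phi>0 \<phi>)) = (\<Sum>a<M. \<Sum>i\<in>?I. \<Sum>b<M. \<Sum>j\<in>?I. ?H a b i j)"
    unfolding expect_def idx_Suc_sum prodvec_Cons by (simp add: ac_simps)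
  also have "\<dots> = (\<Sum>a<M. \<Sum>i\<in>?I. \<Sum>j\<in>?I. \<Sum>b<M. ?H a b i j)"
    by (rule sum.cong[OF refl], rule sum.cong[OF refl], rule sum.swap)
  also have "\<dots> = (\<Sum>i\<in>?I. \<Sum>a<M. \<Sum>j\<in>?I. \<Sum>b<M. ?H a b i j)"
    by (rule sum.swap)
  also have "\<dots> = (\<Sum>i\<in>?I. \<Sum>j\<in>?I. \<Sum>a<M. \<Sum>b<M. ?H a b i j)"
    by (rule sum.cong[OF refl], rule sum.swap)
  also have "\<dots> = expect M N (\<lambda>i j. \<Sum>a<M. \<Sum>b<M. \<phi>0 a * \<phi>0 b * Q (a#i) (b#j)) ?\<psi>"
    unfolding expect_def by (simp add: sum_distrib_left sum_distrib_right ac_simps)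
  finally show ?thesis .
qed

lemma mult_delta: "(if P then 1 else 0) * (z::real) = (if P then z else 0)" by simp

lemma delta2:
  fixes R :: "nat \<Rightarrow> nat \<Rightarrow> real"
  assumes "p < M" "q < M"
  shows "(\<Sum>x<M. \<Sum>y<M. (if x = p then 1 else 0) * (if y = q then 1 else 0) * R x y) = R p q"
proof -
  have "(\<Sum>x<M. \<Sum>y<M. (if x = p then 1 else 0) * (if y = q then 1 else 0) * R x y)
      = (\<Sum>x<M. if x = p then (\<Sum>y<M. if y = q then R p q else 0) else 0)"
  proof (rule sum.cong[OF refl])
    fix x assume "x \<in> {..<M}"
    show "(\<Sum>y<M. (if x = p then 1 else 0) * (if y = q then 1 else 0) * R x y) = (if x = p then (\<Sum>y<M. if y = q then R p q else 0) else 0)"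
      by (cases "x = p") (auto simp: mult_delta)
  qed
  also have "\<dots> = R p q" using assms by simp
  finally show ?thesis .
qed

lemma polar:
  fixes R :: "nat \<Rightarrow> nat \<Rightarrow> real"
  assumes h: "\<And>\<phi>. (\<Sum>a<M. \<Sum>b<M. \<phi> a * \<phi> b * R a b) = 0" and ab: "a < M" "b < M"
  shows "R a b + R b a = 0"
proof (cases "a = b")
  case True
  have "R a a = 0" using h[of "\<lambda>x. if x = a then 1 else 0"] delta2[OF ab(1) ab(1), of R] by simp
  then show ?thesis using True by simp
next
  case False
  let ?e = "\<lambda>p x. if x = p then (1::real) else 0"
  have "0 = (\<Sum>x<M. \<Sum>y<M. (?e a x + ?e b x) * (?e a y + ?e b y) * R x y)"
    using h[of "\<lambda>x. ?e a x + ?e b x"] by simp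
  also have "\<dots> = (\<Sum>x<M. \<Sum>y<M. ?e a x * ?e a y * R x y) + (\<Sum>x<M. \<Sum>y<M. ?e a x * ?e b y * R x y)
     + (\<Sum>x<M. \<Sum>y<M. ?e b x * ?e a y * R x y) + (\<Sum>x<M. \<Sum>y<M. ?e b x * ?e b y * R x y)"
    by (simp only: distrib_left distrib_right sum.distrib add.assoc)
  also have "\<dots> = R a a + R a b + R b a + R b b"
    using ab by (simp only: delta2)
  finally have 1: "R a a + R a b + R b a + R b b = 0" by simp
  have "R a a = 0" using h[of "\<lambda>x. if x = a then 1 else 0"] delta2[OF ab(1) ab(1), of R] by simp
  moreover have "R b b = 0" using h[of "\<lambda>x. if x = b then 1 else 0"] delta2[OF ab(2) ab(2), of R] by simp
  ultimately show ?thesis using 1 by simp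
qed

lemma one_to_two_aux:
  assumes "\<forall>\<phi>. expect M N Q (prodvec N \<phi>) = 0" "i \<in> idx M N" "j \<in> idx M N"
  shows "(\<Sum>\<tau>\<in>Pow {0..<N}. ptrans N \<tau> Q i j) = 0"
  using assms
proof (induction N arbitrary: Q i j)
  case 0
  then have ij: "i = []" "j = []" by (auto simp: idx_0)
  have "expect M 0 Q (prodvec 0 (\<lambda>_ _. 0)) = Q [] []"
    by (simp add: expect_def idx_0 prodvec_def)
  with 0 ij show ?case by (simp add: ptrans_def mix_0)
next
  case (Suc N)
  obtain a i' where i: "i = a#i'" "a < M" "i' \<in> idx M N" using idx_Suc_cases[OF Suc.prems(2)] by blast
  obtain b j' where j: "j = b#j'" "b < M" "j' \<in> idx M N" using idx_Suc_cases[OF Suc.prems(3)] by blast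
  define R where "R a b = (\<Sum>\<sigma>\<in>Pow {0..<N}. ptrans N \<sigma> (\<lambda>x y. Q (a#x) (b#y)) i' j')" for a b
  have rw: "(\<Sum>\<tau>\<in>Pow {0..<Suc N}. ptrans (Suc N) \<tau> Q (a#i') (b#j')) = R a b + R b a"
    by (simp add: sum_Pow_Suc ptrans_Cons1 ptrans_Cons2 R_def sum.distrib)
  have z: "(\<Sum>x<M. \<Sum>y<M. \<phi>0 x * \<phi>0 y * R x y) = 0" for \<phi>0
  proof -
    let ?Q' = "\<lambda>u v. \<Sum>x<M. \<Sum>y<M. \<phi>0 x * \<phi>0 y * Q (x#u) (y#v)"
    have "\<forall>\<phi>. expect M N ?Q' (prodvec N \<phi>) = 0"
    proof
      fix \<phi>
      show "expect M N ?Q' (prodvec N \<phi>) = 0"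
        using Suc.prems(1) expect_Cons[of M N Q \<phi>0 \<phi>] by simp
    qed
    from Suc.IH[OF this i(3) j(3)]
    have "(\<Sum>\<sigma>\<in>Pow {0..<N}. ptrans N \<sigma> ?Q' i' j') = 0" .
    moreover have "(\<Sum>\<sigma>\<in>Pow {0..<N}. ptrans N \<sigma> ?Q' i' j') = (\<Sum>x<M. \<Sum>y<M. \<phi>0 x * \<phi>0 y * R x y)"
    proof -
      have "(\<Sum>\<sigma>\<in>Pow {0..<N}. ptrans N \<sigma> ?Q' i' j') =
          (\<Sum>\<sigma>\<in>Pow {0..<N}. \<Sum>x<M. \<Sum>y<M. \<phi>0 x * \<phi>0 y * ptrans N \<sigma> (\<lambda>u v. Q (x#u) (y#v)) i' j')"
        by (simp add: ptrans_def)
      also have "\<dots> = (\<Sum>x<M. \<Sum>\<sigma>\<in>Pow {0..<N}. \<Sum>y<M. \<phi>0 x * \<phi>0 y * ptrans N \<sigma> (\<lambda>u v. Q (x#u) (y#v)) i' j')"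
        by (rule sum.swap)
      also have "\<dots> = (\<Sum>x<M. \<Sum>y<M. \<Sum>\<sigma>\<in>Pow {0..<N}. \<phi>0 x * \<phi>0 y * ptrans N \<sigma> (\<lambda>u v. Q (x#u) (y#v)) i' j')"
        by (rule sum.cong[OF refl], rule sum.swap)
      also have "\<dots> = (\<Sum>x<M. \<Sum>y<M. \<phi>0 x * \<phi>0 y * R x y)"
        by (simp add: R_def sum_distrib_left)
      finally show ?thesis .
    qed
    ultimately show ?thesis by simp
  qed
  have "R a b + R b a = 0" by (rule polar[OF z i(2) j(2)])
  then show ?case using rw i(1) j(1) by simp
qed

lemma expect_scale: "expect M N Q (\<lambda>i. c * \<psi> i) = c^2 * expect M N Q \<psi>"
  unfolding expect_def by (simp add: sum_distrib_left power2_eq_square algebra_simps)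

lemma prodvec_scale:
  "prodvec (Suc n) (\<phi>(0 := (\<lambda>x. c * \<phi> 0 x))) i = c * prodvec (Suc n) \<phi> i"
  by (simp add: prodvec_def prod.lessThan_Suc_shift del: prod.lessThan_Suc)

lemma one_all:
  assumes "\<forall>\<psi>\<in>Vprod M N. expect M N Q \<psi> = 0"
  shows "expect M N Q (prodvec N \<phi>) = 0"
proof -
  let ?\<psi> = "prodvec N \<phi>"
  define s where "s = (\<Sum>i\<in>idx M N. (?\<psi> i)^2)"
  show ?thesis
  proof (cases "s = 0")
    case True
    then have "\<forall>i\<in>idx M N. (?\<psi> i)^2 = 0"
      unfolding s_def by (subst sum_nonneg_eq_0_iff[symmetric]) (auto simp: finite_idx)
    then have "\<forall>i\<in>idx M N. ?\<psi> i = 0" by simp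
    then show ?thesis by (simp add: expect_def)
  next
    case False
    have spos: "s > 0" using False unfolding s_def by (simp add: sum_nonneg order_le_neq_trans)
    show ?thesis
    proof (cases N)
      case 0
      have "s = 1" unfolding s_def 0 by (simp add: idx_0 prodvec_def)
      then have "?\<psi> \<in> Vprod M N" unfolding Vprod_def s_def by blast
      then show ?thesis using assms by blast
    next
      case (Suc n)
      let ?c = "1 / sqrt s"
      let ?\<phi>' = "\<phi>(0 := (\<lambda>x. ?c * \<phi> 0 x))"
      have eq: "prodvec N ?\<phi>' = (\<lambda>i. ?c * ?\<psi> i)"
        unfolding Suc by (rule ext) (rule prodvec_scale)
      have "(\<Sum>i\<in>idx M N. (?c * ?\<psi> i)^2) = ?c^2 * s"
        unfolding s_def by (simp only: power_mult_distrib sum_distrib_left)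
      also have "\<dots> = 1" using spos by (simp add: power_divide)
      finally have n1: "(\<Sum>i\<in>idx M N. (prodvec N ?\<phi>' i)^2) = 1" by (simp only: eq)
      have "prodvec N ?\<phi>' \<in> Vprod M N" unfolding Vprod_def using n1 by blast
      then have "expect M N Q (\<lambda>i. ?c * ?\<psi> i) = 0" using assms eq by simp
      moreover have "?c^2 * expect M N Q ?\<psi> = expect M N Q (\<lambda>i. ?c * ?\<psi> i)" by (rule expect_scale[symmetric])
      ultimately have "?c^2 * expect M N Q ?\<psi> = 0" by simp
      then show ?thesis using spos by simp
    qed
  qed
qed

definition sg :: "int \<Rightarrow> real" where "sg x = (if x \<ge> 0 then 1 else -1)"

lemma idx_nth: "i \<in> idx M N \<Longrightarrow> k < N \<Longrightarrow> i!k < M"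
  unfolding idx_def using nth_mem by fastforce

lemma gidx_nth: "g \<in> gidx M N \<Longrightarrow> k < N \<Longrightarrow> g!k \<in> Gamma M"
  unfolding gidx_def using nth_mem by fastforce

lemma G_swap:
  assumes "gell_mann M G" "\<gamma> \<in> Gamma M" "p < M" "q < M"
  shows "G \<gamma> q p = sg \<gamma> * G \<gamma> p q"
proof -
  have s: "\<forall>\<gamma>\<in>Gamma M. \<gamma> \<ge> 0 \<longrightarrow> (\<forall>a<M. \<forall>b<M. G \<gamma> a b = G \<gamma> b a)"
   and a: "\<forall>\<gamma>\<in>Gamma M. \<gamma> < 0 \<longrightarrow> (\<forall>a<M. \<forall>b<M. G \<gamma> a b = - G \<gamma> b a)"
    using assms(1) unfolding gell_mann_def by blast+
  show ?thesis
  proof (cases "\<gamma> \<ge> 0")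
    case True
    have eq: "G \<gamma> q p = G \<gamma> p q" using s assms(2-4) True by blast
    have sg1: "sg \<gamma> = 1" using True by (simp add: sg_def)
    show ?thesis unfolding sg1 mult_1_left by (rule eq)
  next
    case False
    have eq: "G \<gamma> q p = - G \<gamma> p q" using a assms(2-4) False by (meson not_le)
    have sg1: "sg \<gamma> = -1" using False by (simp add: sg_def)
    show ?thesis unfolding sg1 mult_minus1 by (rule eq)
  qed
qed

lemma gtensor_ptrans:
  assumes G: "gell_mann M G" and g: "g \<in> gidx M N" and ij: "i \<in> idx M N" "j \<in> idx M N"
    and t: "\<tau> \<subseteq> {0..<N}"
  shows "gtensor N G g (mix N \<tau> j i) (mix N \<tau> i j) = (\<Prod>k\<in>\<tau>. sg (g!k)) * gtensor N G g i j"
proof -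
  have "gtensor N G g (mix N \<tau> j i) (mix N \<tau> i j)
      = (\<Prod>k<N. (if k \<in> \<tau> then sg (g!k) else 1) * G (g!k) (i!k) (j!k))"
    unfolding gtensor_def
  proof (rule prod.cong[OF refl])
    fix k assume k: "k \<in> {..<N}"
    have gk: "g!k \<in> Gamma M" "i!k < M" "j!k < M" using g ij k
      by (auto intro: idx_nth gidx_nth)
    note sw = G_swap[OF G gk]
    show "G (g ! k) (mix N \<tau> j i ! k) (mix N \<tau> i j ! k) = (if k \<in> \<tau> then sg (g!k) else 1) * G (g!k) (i!k) (j!k)"
      using k sw by (auto simp: nth_mix)
  qed
  also have "\<dots> = (\<Prod>k<N. if k \<in> \<tau> then sg (g!k) else 1) * gtensor N G g i j"
    unfolding gtensor_def prod.distrib ..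
  also have "(\<Prod>k<N. if k \<in> \<tau> then sg (g!k) else 1) = (\<Prod>k\<in>\<tau>. sg (g!k))"
  proof -
    have "(\<Prod>k<N. if k \<in> \<tau> then sg (g!k) else 1) = (\<Prod>k\<in>{..<N} \<inter> {k. k \<in> \<tau>}. sg (g!k))"
      by (simp add: prod.If_cases)
    also have "{..<N} \<inter> {k. k \<in> \<tau>} = \<tau>" using t by auto
    finally show ?thesis .
  qed
  finally show ?thesis .
qed

lemma sum_Pow_sg:
  "(\<Sum>\<tau>\<in>Pow {0..<N}. \<Prod>k\<in>\<tau>. sg (g!k)) = (if \<forall>k<N. g!k \<ge> 0 then 2^N else 0)"
proof -
  have "(\<Prod>k\<in>{0..<N}. sg (g!k) + 1) = (\<Sum>\<tau>\<in>Pow {0..<N}. (\<Prod>k\<in>\<tau>. sg (g!k)) * (\<Prod>k\<in>{0..<N}-\<tau>. 1))"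
    by (rule prod_add) simp
  then have e: "(\<Sum>\<tau>\<in>Pow {0..<N}. \<Prod>k\<in>\<tau>. sg (g!k)) = (\<Prod>k\<in>{0..<N}. sg (g!k) + 1)" by simp
  show ?thesis
  proof (cases "\<forall>k<N. g!k \<ge> 0")
    case True
    then have "(\<Prod>k\<in>{0..<N}. sg (g!k) + 1) = (\<Prod>k\<in>{0..<N}. 2)"
      by (intro prod.cong) (auto simp: sg_def)
    then show ?thesis using e by (simp only: if_P[OF True] prod_constant card_atLeastLessThan diff_zero)
  next
    case False
    then obtain k where "k < N" "g!k < 0" by auto
    then have "(\<Prod>k\<in>{0..<N}. sg (g!k) + 1) = 0"
      by (subst prod_zero_iff) (auto simp: sg_def intro!: bexI[of _ k])
    then show ?thesis using e by (simp only: if_not_P[OF False])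
  qed
qed

lemma finite_gidx: "finite (gidx M N)"
  unfolding gidx_def by (rule finite_lists) (simp add: Gamma_def)

lemma S_expansion:
  assumes G: "gell_mann M G"
    and Q: "\<forall>i\<in>idx M N. \<forall>j\<in>idx M N. Q i j = (\<Sum>g\<in>gidx M N. d g * gtensor N G g i j)"
    and ij: "i \<in> idx M N" "j \<in> idx M N"
  shows "(\<Sum>\<tau>\<in>Pow {0..<N}. ptrans N \<tau> Q i j)
       = (\<Sum>g\<in>gidx M N. d g * (if \<forall>k<N. g!k \<ge> 0 then 2^N else 0) * gtensor N G g i j)"
proof -
  have "(\<Sum>\<tau>\<in>Pow {0..<N}. ptrans N \<tau> Q i j)
      = (\<Sum>\<tau>\<in>Pow {0..<N}. \<Sum>g\<in>gidx M N. d g * ((\<Prod>k\<in>\<tau>. sg (g!k)) * gtensor N G g i j))"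
  proof (rule sum.cong[OF refl])
    fix \<tau> assume t: "\<tau> \<in> Pow {0..<N}"
    have "ptrans N \<tau> Q i j = (\<Sum>g\<in>gidx M N. d g * gtensor N G g (mix N \<tau> j i) (mix N \<tau> i j))"
      unfolding ptrans_def using Q mix_idx[OF ij(2) ij(1)] mix_idx[OF ij(1) ij(2)] by blast
    also have "\<dots> = (\<Sum>g\<in>gidx M N. d g * ((\<Prod>k\<in>\<tau>. sg (g!k)) * gtensor N G g i j))"
      using gtensor_ptrans[OF G _ ij] t by (intro sum.cong) auto
    finally show "ptrans N \<tau> Q i j = \<dots>" .
  qed
  also have "\<dots> = (\<Sum>g\<in>gidx M N. \<Sum>\<tau>\<in>Pow {0..<N}. d g * ((\<Prod>k\<in>\<tau>. sg (g!k)) * gtensor N G g i j))"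
    by (rule sum.swap)
  also have "\<dots> = (\<Sum>g\<in>gidx M N. d g * (\<Sum>\<tau>\<in>Pow {0..<N}. \<Prod>k\<in>\<tau>. sg (g!k)) * gtensor N G g i j)"
    by (simp add: sum_distrib_left sum_distrib_right mult.assoc)
  also have "\<dots> = (\<Sum>g\<in>gidx M N. d g * (if \<forall>k<N. g!k \<ge> 0 then 2^N else 0) * gtensor N G g i j)"
    by (simp only: sum_Pow_sg)
  finally show ?thesis .
qed

lemma delta_lists:
  assumes "i \<in> idx M N" "a \<in> idx M N" "j \<in> idx M N" "b \<in> idx M N"
  shows "(\<Prod>k<N. (if i!k = a!k \<and> j!k = b!k then 1 else 0) :: real) = (if i = a \<and> j = b then 1 else 0)"
proof (cases "i = a \<and> j = b")
  case True then show ?thesis by simp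
next
  case False
  have l: "length i = N" "length a = N" "length j = N" "length b = N" using assms by (auto simp: idx_def)
  from False obtain k where "k < N" "\<not> (i!k = a!k \<and> j!k = b!k)"
    using l by (auto simp: list_eq_iff_nth_eq)
  then have "(\<Prod>k<N. (if i!k = a!k \<and> j!k = b!k then 1 else 0) :: real) = 0"
    by (subst prod_zero_iff) (auto intro!: bexI[of _ k])
  then show ?thesis using False by simp
qed

lemma delta_sum2:
  assumes "i \<in> A" "j \<in> B" "finite A" "finite B"
  shows "(\<Sum>a\<in>A. \<Sum>b\<in>B. Q a b * (if i = a \<and> j = b then 1 else 0)) = (Q i j :: real)"
proof -
  have "(\<Sum>a\<in>A. \<Sum>b\<in>B. Q a b * (if i = a \<and> j = b then 1 else 0)) = (\<Sum>a\<in>A. if a = i then (\<Sum>b\<in>B. if b = j then Q i j else 0) else 0)"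
  proof (rule sum.cong[OF refl])
    fix a assume "a \<in> A"
    show "(\<Sum>b\<in>B. Q a b * (if i = a \<and> j = b then 1 else 0)) = (if a = i then (\<Sum>b\<in>B. if b = j then Q i j else 0) else 0)"
      by (cases "a = i") (auto intro!: sum.cong)
  qed
  also have "\<dots> = Q i j" using assms by simp
  finally show ?thesis .
qed

lemma spanning:
  assumes G: "gell_mann M G"
  shows "\<exists>d. \<forall>i\<in>idx M N. \<forall>j\<in>idx M N. Q i j = (\<Sum>g\<in>gidx M N. d g * gtensor N G g i j)"
proof -
  have ex: "\<forall>xy::nat\<times>nat. \<exists>c. \<forall>p<M. \<forall>q<M. (if p = fst xy \<and> q = snd xy then 1 else 0) = (\<Sum>\<gamma>\<in>Gamma M. c \<gamma> * G \<gamma> p q)"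
  proof
    fix xy :: "nat\<times>nat"
    have "\<forall>X :: nat \<Rightarrow> nat \<Rightarrow> real. \<exists>c :: int \<Rightarrow> real. \<forall>a<M. \<forall>b<M. X a b = (\<Sum>\<gamma>\<in>Gamma M. c \<gamma> * G \<gamma> a b)"
      using G unfolding gell_mann_def by blast
    from this[rule_format, of "\<lambda>p q. if p = fst xy \<and> q = snd xy then 1 else 0"]
    show "\<exists>c. \<forall>p<M. \<forall>q<M. (if p = fst xy \<and> q = snd xy then 1 else 0) = (\<Sum>\<gamma>\<in>Gamma M. c \<gamma> * G \<gamma> p q)" .
  qed
  obtain e0 where e0: "\<forall>xy::nat\<times>nat. \<forall>p<M. \<forall>q<M. (if p = fst xy \<and> q = snd xy then 1 else 0) = (\<Sum>\<gamma>\<in>Gamma M. e0 xy \<gamma> * G \<gamma> p q)"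
    using choice[OF ex] by blast
  define E where "E a b g = (\<Prod>k<N. e0 (a!k, b!k) (g!k))" for a b g
  define d where "d g = (\<Sum>a\<in>idx M N. \<Sum>b\<in>idx M N. Q a b * E a b g)" for g
  have fg: "finite (Gamma M)" by (simp add: Gamma_def)
  have key: "(\<Prod>k<N. (if i!k = a!k \<and> j!k = b!k then 1 else 0) :: real) = (\<Sum>g\<in>gidx M N. E a b g * gtensor N G g i j)"
    if ij: "i \<in> idx M N" "j \<in> idx M N" for i j a b
  proof -
    have "(\<Prod>k<N. (if i!k = a!k \<and> j!k = b!k then 1 else 0) :: real) = (\<Prod>k<N. \<Sum>\<gamma>\<in>Gamma M. e0 (a!k, b!k) \<gamma> * G \<gamma> (i!k) (j!k))"
    proof (rule prod.cong[OF refl])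
      fix k assume "k \<in> {..<N}"
      then have "i!k < M" "j!k < M" using ij idx_nth by auto
      then show "(if i!k = a!k \<and> j!k = b!k then 1 else 0) = (\<Sum>\<gamma>\<in>Gamma M. e0 (a!k, b!k) \<gamma> * G \<gamma> (i!k) (j!k))"
        using e0 by simp
    qed
    also have "\<dots> = (\<Sum>g\<in>gidx M N. \<Prod>k<N. e0 (a!k, b!k) (g!k) * G (g!k) (i!k) (j!k))"
      unfolding gidx_def by (rule prod_sum_lists[OF fg])
    also have "\<dots> = (\<Sum>g\<in>gidx M N. E a b g * gtensor N G g i j)"
      unfolding E_def gtensor_def prod.distrib ..
    finally show ?thesis .
  qed
  have "Q i j = (\<Sum>g\<in>gidx M N. d g * gtensor N G g i j)" if ij: "i \<in> idx M N" "j \<in> idx M N" for i j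
  proof -
    have "Q i j = (\<Sum>a\<in>idx M N. \<Sum>b\<in>idx M N. Q a b * (if i = a \<and> j = b then 1 else 0))"
      using delta_sum2[OF ij finite_idx finite_idx] by simp
    also have "\<dots> = (\<Sum>a\<in>idx M N. \<Sum>b\<in>idx M N. Q a b * (\<Sum>g\<in>gidx M N. E a b g * gtensor N G g i j))"
      using delta_lists[OF ij(1) _ ij(2)] key[OF ij] by (intro sum.cong refl) simp
    also have "\<dots> = (\<Sum>a\<in>idx M N. \<Sum>b\<in>idx M N. \<Sum>g\<in>gidx M N. Q a b * E a b g * gtensor N G g i j)"
      by (simp add: sum_distrib_left mult.assoc)
    also have "\<dots> = (\<Sum>a\<in>idx M N. \<Sum>g\<in>gidx M N. \<Sum>b\<in>idx M N. Q a b * E a b g * gtensor N G g i j)"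
      by (rule sum.cong[OF refl], rule sum.swap)
    also have "\<dots> = (\<Sum>g\<in>gidx M N. \<Sum>a\<in>idx M N. \<Sum>b\<in>idx M N. Q a b * E a b g * gtensor N G g i j)"
      by (rule sum.swap)
    also have "\<dots> = (\<Sum>g\<in>gidx M N. d g * gtensor N G g i j)"
      by (simp add: d_def sum_distrib_right)
    finally show ?thesis .
  qed
  then show ?thesis by blast
qed

theorem proposition5:
  fixes M N :: nat
    and G :: "int \<Rightarrow> nat \<Rightarrow> nat \<Rightarrow> real"
    and Q :: "nat list \<Rightarrow> nat list \<Rightarrow> real"
  assumes "gell_mann M G"
    and "symmetric_op M N Q"
  shows "((\<forall>\<psi>\<in>Vprod M N. expect M N Q \<psi> = 0)
          \<longleftrightarrow> (\<forall>i\<in>idx M N. \<forall>j\<in>idx M N. (\<Sum>\<tau>\<in>Pow {0..<N}. ptrans N \<tau> Q i j) = 0))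
       \<and> ((\<forall>i\<in>idx M N. \<forall>j\<in>idx M N. (\<Sum>\<tau>\<in>Pow {0..<N}. ptrans N \<tau> Q i j) = 0)
          \<longleftrightarrow> (\<exists>c :: int list \<Rightarrow> real.
                (\<forall>g\<in>gidx M N. (\<forall>k<N. g ! k \<ge> 0) \<longrightarrow> c g = 0) \<and>
                (\<forall>i\<in>idx M N. \<forall>j\<in>idx M N.
                   Q i j = (\<Sum>g\<in>gidx M N. c g * gtensor N G g i j))))"
proof (intro conjI iffI)
  assume h: "\<forall>\<psi>\<in>Vprod M N. expect M N Q \<psi> = 0"
  show "\<forall>i\<in>idx M N. \<forall>j\<in>idx M N. (\<Sum>\<tau>\<in>Pow {0..<N}. ptrans N \<tau> Q i j) = 0"
    using one_to_two_aux one_all[OF h] by blast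
next
  assume h: "\<forall>i\<in>idx M N. \<forall>j\<in>idx M N. (\<Sum>\<tau>\<in>Pow {0..<N}. ptrans N \<tau> Q i j) = 0"
  show "\<forall>\<psi>\<in>Vprod M N. expect M N Q \<psi> = 0"
    using two_to_one[OF h] unfolding Vprod_def by blast
next
  assume h: "\<forall>i\<in>idx M N. \<forall>j\<in>idx M N. (\<Sum>\<tau>\<in>Pow {0..<N}. ptrans N \<tau> Q i j) = 0"
  obtain d where d: "\<forall>i\<in>idx M N. \<forall>j\<in>idx M N. Q i j = (\<Sum>g\<in>gidx M N. d g * gtensor N G g i j)"
    using spanning[OF assms(1)] by blast
  define w where "w g = (if \<forall>k<N. g!k \<ge> 0 then (2::real)^N else 0)" for g :: "int list"
  define c where "c g = (if \<forall>k<N. g!k \<ge> 0 then 0 else d g)" for g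
  show "\<exists>c :: int list \<Rightarrow> real.
                (\<forall>g\<in>gidx M N. (\<forall>k<N. g ! k \<ge> 0) \<longrightarrow> c g = 0) \<and>
                (\<forall>i\<in>idx M N. \<forall>j\<in>idx M N.
                   Q i j = (\<Sum>g\<in>gidx M N. c g * gtensor N G g i j))"
  proof (intro exI[of _ c] conjI ballI impI)
    fix g assume "g \<in> gidx M N" "\<forall>k<N. g ! k \<ge> 0"
    then show "c g = 0" by (simp add: c_def)
  next
    fix i j assume ij: "i \<in> idx M N" "j \<in> idx M N"
    have S0: "(\<Sum>g\<in>gidx M N. d g * w g * gtensor N G g i j) = 0"
      using S_expansion[OF assms(1) d ij] h ij unfolding w_def by simp
    have pw: "d g * gtensor N G g i j = c g * gtensor N G g i j + d g * w g * gtensor N G g i j / 2^N" for g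
    proof (cases "\<forall>k<N. g!k \<ge> 0")
      case True then show ?thesis unfolding c_def w_def if_P[OF True] by simp
    next
      case False then show ?thesis unfolding c_def w_def if_not_P[OF False] by simp
    qed
    have "Q i j = (\<Sum>g\<in>gidx M N. d g * gtensor N G g i j)" using d ij by blast
    also have "\<dots> = (\<Sum>g\<in>gidx M N. c g * gtensor N G g i j) + (\<Sum>g\<in>gidx M N. d g * w g * gtensor N G g i j) / 2^N"
      by (simp only: pw sum.distrib sum_divide_distrib)
    also have "\<dots> = (\<Sum>g\<in>gidx M N. c g * gtensor N G g i j)" using S0 by simp
    finally show "Q i j = (\<Sum>g\<in>gidx M N. c g * gtensor N G g i j)" .
  qed
next
  assume "\<exists>c :: int list \<Rightarrow> real.
                (\<forall>g\<in>gidx M N. (\<forall>k<N. g ! k \<ge> 0) \<longrightarrow> c g = 0) \<and>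
                (\<forall>i\<in>idx M N. \<forall>j\<in>idx M N.
                   Q i j = (\<Sum>g\<in>gidx M N. c g * gtensor N G g i j))"
  then obtain c where c0: "\<forall>g\<in>gidx M N. (\<forall>k<N. g ! k \<ge> 0) \<longrightarrow> c g = 0"
    and cQ: "\<forall>i\<in>idx M N. \<forall>j\<in>idx M N. Q i j = (\<Sum>g\<in>gidx M N. c g * gtensor N G g i j)" by blast
  show "\<forall>i\<in>idx M N. \<forall>j\<in>idx M N. (\<Sum>\<tau>\<in>Pow {0..<N}. ptrans N \<tau> Q i j) = 0"
  proof (intro ballI)
    fix i j assume ij: "i \<in> idx M N" "j \<in> idx M N"
    have "(\<Sum>\<tau>\<in>Pow {0..<N}. ptrans N \<tau> Q i j)
       = (\<Sum>g\<in>gidx M N. c g * (if \<forall>k<N. g!k \<ge> 0 then 2^N else 0) * gtensor N G g i j)"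
      by (rule S_expansion[OF assms(1) cQ ij])
    also have "\<dots> = 0"
      using c0 by (intro sum.neutral) auto
    finally show "(\<Sum>\<tau>\<in>Pow {0..<N}. ptrans N \<tau> Q i j) = 0" .
  qed
qed

end
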